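(* If $\diamondsuit$ holds, then the space $\sigma(2^{\omega_1})=\{x\in 2^{\omega_1}:|x^{-1}(1)|<\omega\}$, as a subspace of the Cantor cube $2^{\omega_1}$, is not discretely discretely generated.
   Context: A space $X$ is discretely discretely generated (DDG) if for every set $A\subseteq X$ and every discrete set $D\subseteq\overline{A}$ there is a discrete set $E\subseteq A$ with $D\subseteq\overline{E}$. $\diamondsuit$ is Jensen's diamond principle. *)

theory Defs
  imports "HOL-Analysis.Analysis"
begin

definition discrete_in :: "'a topology \<Rightarrow> 'a set \<Rightarrow> bool" where
  "discrete_in X D \<longleftrightarrow> D \<subseteq> topspace X \<and>
     (\<forall>x\<in>D. \<exists>U. openin X U \<and> U \<inter> D = {x})"

definition DDG :: "'a topology \<Rightarrow> bool" where
  "DDG X \<longleftrightarrow> (\<forall>A D. A \<subseteq> topspace X \<longrightarrow> D \<subseteq> X closure_of A \<longrightarrow> discrete_in X D \<longrightarrow>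
      (\<exists>E. E \<subseteq> A \<and> discrete_in X E \<and> D \<subseteq> X closure_of E))"

text \<open>The ordinal omega_1 is represented by a well-ordered type which is uncountable
  but all of whose proper initial segments are countable.\<close>
definition is_omega1_type :: "'a::wellorder itself \<Rightarrow> bool" where
  "is_omega1_type _ \<longleftrightarrow> \<not> countable (UNIV :: 'a set) \<and> (\<forall>a::'a. countable {..<a})"

definition club :: "'a::wellorder set \<Rightarrow> bool" where
  "club C \<longleftrightarrow> (\<forall>a. \<exists>c\<in>C. a \<le> c) \<and>
     (\<forall>a. ({..<a} \<inter> C \<noteq> {} \<and> (\<forall>b<a. \<exists>c\<in>C. b < c \<and> c < a)) \<longrightarrow> a \<in> C)"

definition stationary :: "'a::wellorder set \<Rightarrow> bool" where
  "stationary S \<longleftrightarrow> (\<forall>C. club C \<longrightarrow> S \<inter> C \<noteq> {})"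

definition diamond :: "'a::wellorder itself \<Rightarrow> bool" where
  "diamond _ \<longleftrightarrow> (\<exists>A :: 'a \<Rightarrow> 'a set. (\<forall>a. A a \<subseteq> {..<a}) \<and>
      (\<forall>X :: 'a set. stationary {a. X \<inter> {..<a} = A a}))"

definition cantor_cube :: "('i \<Rightarrow> bool) topology" where
  "cantor_cube = product_topology (\<lambda>_. discrete_topology (UNIV :: bool set)) UNIV"

definition sigma_set :: "('i \<Rightarrow> bool) set" where
  "sigma_set = {x. finite {i. x i}}"

end

theory Submission
  imports Defs
begin


definition cyl :: "'i set \<Rightarrow> ('i \<Rightarrow> bool) \<Rightarrow> ('i \<Rightarrow> bool) set" where
  "cyl F x0 = {x. \<forall>i\<in>F. x i = x0 i}"

lemma topspace_cc [simp]: "topspace (cantor_cube :: ('i \<Rightarrow> bool) topology) = UNIV"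
  by (simp add: cantor_cube_def PiE_UNIV_domain)

lemma cyl_open:
  assumes "finite F"
  shows "openin (cantor_cube :: ('i \<Rightarrow> bool) topology) (cyl F x0)"
proof -
  define X where "X = (\<lambda>i. if i \<in> F then {x0 i} else (UNIV :: bool set))"
  have "openin (product_topology (\<lambda>_. discrete_topology (UNIV::bool set)) UNIV) (\<Pi>\<^sub>E i\<in>UNIV. X i)"
    apply (rule product_topology_basis)
    apply simp
    apply (rule finite_subset[OF _ assms])
    apply (auto simp: X_def)
    done
  moreover have "(\<Pi>\<^sub>E i\<in>UNIV. X i) = cyl F x0"
  proof (rule set_eqI)
    fix x show "x \<in> (\<Pi>\<^sub>E i\<in>UNIV. X i) \<longleftrightarrow> x \<in> cyl F x0"
    proof
      assume "x \<in> (\<Pi>\<^sub>E i\<in>UNIV. X i)"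
      then have xi: "\<And>i. x i \<in> X i" by (simp add: PiE_UNIV_domain Pi_iff)
      show "x \<in> cyl F x0" unfolding cyl_def
      proof (intro CollectI ballI)
        fix i assume "i \<in> F"
        then show "x i = x0 i" using xi[of i] by (simp add: X_def)
      qed
    next
      assume "x \<in> cyl F x0"
      then have "\<And>i. x i \<in> X i" unfolding cyl_def X_def by simp
      then show "x \<in> (\<Pi>\<^sub>E i\<in>UNIV. X i)" by (simp add: PiE_UNIV_domain Pi_iff)
    qed
  qed
  ultimately show ?thesis by (simp add: cantor_cube_def)
qed

lemma open_cyl:
  assumes "openin (cantor_cube :: ('i \<Rightarrow> bool) topology) U" "x \<in> U"
  shows "\<exists>F. finite F \<and> cyl F x \<subseteq> U"
proof -
  have U: "openin (product_topology (\<lambda>_. discrete_topology (UNIV::bool set)) UNIV) U"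
    using assms(1) by (simp add: cantor_cube_def)
  obtain X where X: "x \<in> (\<Pi>\<^sub>E i\<in>UNIV. X i)" "\<forall>i. openin (discrete_topology (UNIV::bool set)) (X i)"
     "finite {i. X i \<noteq> topspace (discrete_topology (UNIV::bool set))}"
     "(\<Pi>\<^sub>E i\<in>UNIV. X i) \<subseteq> U"
    using product_topology_open_contains_basis[OF U assms(2)] by (elim exE conjE) (rule that; assumption)
  show ?thesis
  proof (intro exI conjI)
    show "finite {i. X i \<noteq> UNIV}" using X(3) by (simp only: topspace_discrete_topology)
    show "cyl {i. X i \<noteq> UNIV} x \<subseteq> U"
    proof
      fix y assume "y \<in> cyl {i. X i \<noteq> UNIV} x"
      then have "y \<in> (\<Pi>\<^sub>E i\<in>UNIV. X i)" using X(1)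
      proof -
        have "\<And>i. y i \<in> X i"
        proof -
          fix i show "y i \<in> X i"
          proof (cases "X i = UNIV")
            case False
            then have "y i = x i" using \<open>y \<in> cyl {i. X i \<noteq> UNIV} x\<close> by (simp add: cyl_def)
            moreover have "x i \<in> X i" using X(1) by (simp add: PiE_UNIV_domain Pi_iff)
            ultimately show ?thesis by simp
          qed simp
        qed
        then show ?thesis by (simp add: PiE_UNIV_domain Pi_iff)
      qed
      then show "y \<in> U" using X(4) by blast
    qed
  qed
qed

abbreviation SS :: "('i \<Rightarrow> bool) topology" where
  "SS \<equiv> subtopology cantor_cube sigma_set"

lemma topspace_SS [simp]: "topspace SS = sigma_set"
  by simp

lemma closure_SS_I:
  assumes "x \<in> sigma_set" "A \<subseteq> sigma_set" "\<And>F. finite F \<Longrightarrow> \<exists>y\<in>A. y \<in> cyl F x"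
  shows "x \<in> SS closure_of A"
  unfolding in_closure_of
proof (intro conjI allI impI)
  show "x \<in> topspace SS" using assms by simp
  fix T assume "x \<in> T \<and> openin SS T"
  then obtain U where U: "openin cantor_cube U" "T = U \<inter> sigma_set" "x \<in> U"
    by (auto simp: openin_subtopology)
  obtain F where "finite F" "cyl F x \<subseteq> U" using open_cyl[OF U(1,3)] by blast
  then obtain y where "y \<in> A" "y \<in> cyl F x" using assms(3) by blast
  then show "\<exists>y. y \<in> A \<and> y \<in> T" using U assms(2) \<open>cyl F x \<subseteq> U\<close> by blast
qed

lemma closure_SS_D:
  assumes "x \<in> SS closure_of A" "finite F"
  shows "\<exists>y\<in>A. y \<in> cyl F x"
proof -
  have "x \<in> topspace SS" using closure_of_subset_topspace[of SS A] assms(1) by blast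
  then have "x \<in> sigma_set" by simp
  have "openin SS (cyl F x \<inter> sigma_set)"
    using cyl_open[OF assms(2)] by (auto simp: openin_subtopology)
  moreover have "x \<in> cyl F x \<inter> sigma_set" using \<open>x \<in> sigma_set\<close> by (simp add: cyl_def)
  ultimately obtain y where "y \<in> A" "y \<in> cyl F x \<inter> sigma_set"
    using assms(1) unfolding in_closure_of by blast
  then show ?thesis by blast
qed

lemma discrete_SS_D:
  assumes "discrete_in SS E" "x \<in> E"
  shows "\<exists>F. finite F \<and> (\<forall>y\<in>E. y \<in> cyl F x \<longrightarrow> y = x)"
proof -
  obtain T where T: "openin SS T" "T \<inter> E = {x}" using assms unfolding discrete_in_def by blast
  then obtain U where U: "openin cantor_cube U" "T = U \<inter> sigma_set"
    by (auto simp: openin_subtopology)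
  have "x \<in> U" using T U by blast
  obtain F where "finite F" "cyl F x \<subseteq> U" using open_cyl[OF U(1) \<open>x \<in> U\<close>] by blast
  moreover have "E \<subseteq> sigma_set" using assms(1) by (auto simp: discrete_in_def)
  ultimately show ?thesis
  proof (intro exI conjI ballI impI)
    fix y assume "y \<in> E" "y \<in> cyl F x"
    then have "y \<in> T \<inter> E" using \<open>cyl F x \<subseteq> U\<close> \<open>E \<subseteq> sigma_set\<close> U(2) by blast
    then show "y = x" using T(2) by simp
  qed (rule \<open>finite F\<close>)
qed

lemma discrete_SS_I:
  assumes "D \<subseteq> sigma_set" "\<And>x. x \<in> D \<Longrightarrow> \<exists>F. finite F \<and> (\<forall>y\<in>D. y \<in> cyl F x \<longrightarrow> y = x)"
  shows "discrete_in SS D"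
  unfolding discrete_in_def
proof (intro conjI ballI)
  show "D \<subseteq> topspace SS" using assms by simp
  fix x assume "x \<in> D"
  then obtain F where F: "finite F" "\<forall>y\<in>D. y \<in> cyl F x \<longrightarrow> y = x" using assms(2) by blast
  have "openin SS (cyl F x \<inter> sigma_set)"
    using cyl_open[OF F(1)] by (auto simp: openin_subtopology)
  moreover have "(cyl F x \<inter> sigma_set) \<inter> D = {x}"
  proof
    show "cyl F x \<inter> sigma_set \<inter> D \<subseteq> {x}" using F(2) by blast
    show "{x} \<subseteq> cyl F x \<inter> sigma_set \<inter> D" using \<open>x \<in> D\<close> assms(1) by (auto simp: cyl_def)
  qed
  ultimately show "\<exists>U. openin SS U \<and> U \<inter> D = {x}" by blast
qed



definition succ :: "'a::wellorder \<Rightarrow> 'a" where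
  "succ x = (LEAST y. x < y)"

definition limit :: "'a::wellorder \<Rightarrow> bool" where
  "limit l \<longleftrightarrow> (\<exists>b. b < l) \<and> (\<forall>b<l. succ b < l)"

definition CP :: "('a::wellorder \<Rightarrow> 'a) \<Rightarrow> 'a set" where
  "CP h = {l. (\<exists>b. b < l) \<and> (\<forall>x<l. h x < l)}"

locale om1 =
  fixes w :: "'a::wellorder itself"
  assumes unc: "\<not> countable (UNIV :: 'a set)"
    and cseg: "\<And>a::'a. countable {..<a}"
begin

lemma cseg_le: "countable {..(a::'a)}"
proof -
  have "{..a} = insert a {..<a}" by auto
  then show ?thesis using cseg[of a] by simp
qed

lemma bounded:
  assumes "countable (B :: 'a set)"
  shows "\<exists>u. \<forall>b\<in>B. b < u"
proof (rule ccontr)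
  assume "\<not> (\<exists>u. \<forall>b\<in>B. b < u)"
  then have "\<forall>u. \<exists>b\<in>B. u \<le> b" by (meson not_less)
  then have "UNIV \<subseteq> (\<Union>b\<in>B. {..b})" by fastforce
  moreover have "countable (\<Union>b\<in>B. {..b})" using assms cseg_le by auto
  ultimately show False using unc countable_subset by blast
qed

lemma uncountable_unbounded:
  assumes "\<not> countable (U :: 'a set)"
  shows "\<exists>x\<in>U. b < x"
proof (rule ccontr)
  assume "\<not> (\<exists>x\<in>U. b < x)"
  then have "U \<subseteq> {..b}" by (auto simp: not_less)
  then show False using assms cseg_le countable_subset by blast
qed

lemma ex_greater: "\<exists>y. (x::'a) < y"
  using bounded[of "{x}"] by auto

lemma less_succ: "(x::'a) < succ x"
  unfolding succ_def by (rule LeastI_ex) (rule ex_greater)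

lemma succ_le: "(x::'a) < y \<Longrightarrow> succ x \<le> y"
  unfolding succ_def by (rule Least_le)

lemma succ_mono: "(x::'a) < y \<Longrightarrow> succ x < succ y"
  using succ_le less_succ order.strict_trans1 by blast

lemma not_limit_succ: "\<not> limit (succ (x::'a))"
  unfolding limit_def using less_succ by blast

lemma CP_closed:
  "club (CP (h :: 'a \<Rightarrow> 'a))"
  unfolding club_def
proof (intro conjI allI impI)
  fix a :: 'a
  assume H: "{..<a} \<inter> CP h \<noteq> {} \<and> (\<forall>b<a. \<exists>c\<in>CP h. b < c \<and> c < a)"
  show "a \<in> CP h" unfolding CP_def
  proof (intro CollectI conjI allI impI)
    show "\<exists>b. b < a" using H by auto
    fix x assume "x < a"
    then obtain c where "c \<in> CP h" "x < c" "c < a" using H by blast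
    then show "h x < a" unfolding CP_def by auto
  qed
next
  fix a :: 'a
  define nx where "nx = (\<lambda>s::'a. SOME u. \<forall>b\<in>insert s (h ` {..s}). b < u)"
  have nx: "\<And>s. \<forall>b\<in>insert s (h ` {..s}). b < nx s"
  proof -
    fix s
    have "countable (insert s (h ` {..s}))" using cseg_le by auto
    then show "\<forall>b\<in>insert s (h ` {..s}). b < nx s"
      unfolding nx_def by (rule someI_ex[OF bounded])
  qed
  define s where "s = (\<lambda>n. (nx ^^ n) a)"
  have s_suc: "\<And>n. s (Suc n) = nx (s n)" by (simp add: s_def)
  obtain u where u: "\<forall>n. s n < u" using bounded[of "range s"] by auto
  define c where "c = (LEAST u. \<forall>n. s n < u)"
  have c: "\<forall>n. s n < c" unfolding c_def using u by (rule LeastI)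
  show "\<exists>c\<in>CP h. a \<le> c"
  proof (intro bexI)
    have "s 0 = a" by (simp add: s_def)
    then show "a \<le> c" using c by (metis less_imp_le)
    show "c \<in> CP h" unfolding CP_def
    proof (intro CollectI conjI allI impI)
      show "\<exists>b. b < c" using c by blast
      fix x assume "x < c"
      have "\<not> (\<forall>n. s n < x)"
      proof
        assume "\<forall>n. s n < x"
        then have "c \<le> x" unfolding c_def by (rule Least_le)
        then show False using \<open>x < c\<close> by simp
      qed
      then obtain n where "x \<le> s n" by (auto simp: not_less)
      then have "h x < nx (s n)" using nx[of "s n"] by auto
      then show "h x < c" using c[rule_format, of "Suc n"] s_suc by simp
    qed
  qed
qed

lemma CP_limit:
  assumes "\<And>x. x < h x" "(l::'a) \<in> CP h"
  shows "limit l"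
  unfolding limit_def
proof (intro conjI allI impI)
  show "\<exists>b. b < l" using assms(2) by (auto simp: CP_def)
  fix b assume "b < l"
  then have "h b < l" using assms(2) by (auto simp: CP_def)
  moreover have "succ b \<le> h b" using assms(1) succ_le by blast
  ultimately show "succ b < l" by simp
qed

lemma ex_limit: "\<exists>l. limit l \<and> (b::'a) < l"
proof -
  obtain c where c: "c \<in> CP succ" "succ b \<le> c"
    using CP_closed[of succ] unfolding club_def by blast
  have "limit c" by (rule CP_limit[OF less_succ c(1)])
  moreover have "b < c" using less_succ[of b] c(2) by simp
  ultimately show ?thesis by blast
qed

lemma iter_less_limit:
  assumes "limit m" "(l::'a) < m"
  shows "(succ ^^ n) l < m"
  using assms unfolding limit_def by (induction n) auto

lemma iter_ge: "(l::'a) \<le> (succ ^^ n) l"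
proof (induction n)
  case (Suc n)
  then show ?case using less_succ[of "(succ ^^ n) l"] by simp
qed simp

lemma iter_strict: "m < n \<Longrightarrow> (succ ^^ m) (l::'a) < (succ ^^ n) l"
proof (induction n)
  case (Suc n)
  then show ?case using less_succ[of "(succ ^^ n) l"]
    by (metis funpow.simps(2) less_Suc_eq o_apply order.strict_trans)
qed simp

lemma iter_inj: "(succ ^^ m) (l::'a) = (succ ^^ n) l \<Longrightarrow> m = n"
  by (metis iter_strict less_irrefl nat_neq_iff)

lemma iter_unique:
  assumes "limit l" "limit m" "(succ ^^ Suc n) (l::'a) = (succ ^^ Suc k) m"
  shows "l = m \<and> n = k"
proof -
  have "\<not> l < m"
  proof
    assume "l < m"
    then have "(succ ^^ Suc n) l < m" using iter_less_limit assms by blast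
    moreover have "m \<le> (succ ^^ Suc k) m" by (rule iter_ge)
    ultimately show False using assms(3) by simp
  qed
  moreover have "\<not> m < l"
  proof
    assume "m < l"
    then have "(succ ^^ Suc k) m < l" using iter_less_limit assms by blast
    moreover have "l \<le> (succ ^^ Suc n) l" by (rule iter_ge)
    ultimately show False using assms(3) by simp
  qed
  ultimately have "l = m" by simp
  then show ?thesis using assms(3) iter_inj by blast
qed

end


definition unh :: "'a set set \<Rightarrow> bool" where
  "unh F \<longleftrightarrow> (\<forall>H. finite H \<longrightarrow> (\<exists>q\<in>F. q \<inter> H = {}))"

definition idx :: "'a::wellorder \<Rightarrow> bool" where
  "idx g \<longleftrightarrow> (\<exists>l n. limit l \<and> g = (succ ^^ Suc n) l)"

definition levnum :: "'a::wellorder \<Rightarrow> 'a \<times> nat" where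
  "levnum g = (THE p. limit (fst p) \<and> g = (succ ^^ Suc (snd p)) (fst p))"

definition lev :: "'a::wellorder \<Rightarrow> 'a" where "lev g = fst (levnum g)"
definition num :: "'a::wellorder \<Rightarrow> nat" where "num g = snd (levnum g)"

definition fb :: "'a::wellorder \<Rightarrow> 'a set set" where
  "fb l = (\<lambda>b. {succ b}) ` {..<l}"

locale dia = om1 w for w :: "'a::wellorder itself" +
  fixes Ag :: "'a \<Rightarrow> 'a set"
  assumes Ag_sub: "\<And>a. Ag a \<subseteq> {..<a}"
    and Ag_stat: "\<And>X. stationary {a. X \<inter> {..<a} = Ag a}"
begin

definition QB :: "('a \<Rightarrow> 'a set set) \<Rightarrow> 'a \<Rightarrow> 'a set set" where
  "QB R l = (let F = (\<lambda>g. insert (lev g) (from_nat_into (R (lev g)) (num g))) ` {g \<in> Ag l. idx g}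
             in if unh F then F else fb l)"

definition Q :: "'a \<Rightarrow> 'a set set" where
  "Q = wfrec {(x, y). x < y} QB"

definition dec :: "'a \<Rightarrow> 'a set" where
  "dec g = insert (lev g) (from_nat_into (Q (lev g)) (num g))"

lemma idx_iter: "limit (l::'a) \<Longrightarrow> idx ((succ ^^ Suc n) l)"
  unfolding idx_def by blast

lemma levnum_iter:
  fixes l :: 'a
  assumes "limit l"
  shows "lev ((succ ^^ Suc n) l) = l \<and> num ((succ ^^ Suc n) l) = n"
proof -
  have "levnum ((succ ^^ Suc n) l) = (l, n)"
    unfolding levnum_def
  proof (rule the_equality)
    show "limit (fst (l, n)) \<and> (succ ^^ Suc n) l = (succ ^^ Suc (snd (l, n))) (fst (l, n))"
      using assms by simp
    fix p :: "'a \<times> nat"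
    assume "limit (fst p) \<and> (succ ^^ Suc n) l = (succ ^^ Suc (snd p)) (fst p)"
    then have "l = fst p \<and> n = snd p" using iter_unique[OF assms] by blast
    then show "p = (l, n)" by (cases p) simp
  qed
  then show ?thesis by (simp add: lev_def num_def)
qed

lemma idx_D:
  fixes g :: 'a
  assumes "idx g"
  shows "limit (lev g) \<and> g = (succ ^^ Suc (num g)) (lev g)"
proof -
  obtain l n where ln: "limit l" "g = (succ ^^ Suc n) l" using assms unfolding idx_def by blast
  then have "lev g = l \<and> num g = n" using levnum_iter[OF ln(1), of n] by simp
  then show ?thesis using ln by simp
qed

lemma lev_less: "idx (g::'a) \<Longrightarrow> lev g < g"
  using idx_D iter_strict[of 0 "Suc (num g)" "lev g"] by (metis funpow_0 zero_less_Suc)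

lemma Q_eq: "Q l = (let F = dec ` {g \<in> Ag l. idx g} in if unh F then F else fb l)"
proof -
  have "Q l = QB (cut Q {(x, y). x < y} l) l"
    unfolding Q_def by (rule wfrec) (rule wf)
  also have "\<dots> = QB Q l"
  proof -
    have "(\<lambda>g. insert (lev g) (from_nat_into (cut Q {(x, y). x < y} l (lev g)) (num g))) ` {g \<in> Ag l. idx g}
        = (\<lambda>g. insert (lev g) (from_nat_into (Q (lev g)) (num g))) ` {g \<in> Ag l. idx g}"
    proof (rule image_cong[OF refl])
      fix g assume "g \<in> {g \<in> Ag l. idx g}"
      then have "lev g < l" using lev_less Ag_sub by fastforce
      then show "insert (lev g) (from_nat_into (cut Q {(x, y). x < y} l (lev g)) (num g))
          = insert (lev g) (from_nat_into (Q (lev g)) (num g))" by (simp add: cut_apply)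
    qed
    then show ?thesis unfolding QB_def by simp
  qed
  finally show ?thesis unfolding QB_def dec_def by simp
qed


lemma limit_infinite:
  assumes "limit (l::'a)"
  shows "infinite {..<l}"
proof
  assume fin: "finite {..<l}"
  obtain b where "b < l" using assms unfolding limit_def by blast
  then have ne: "{..<l} \<noteq> {}" by auto
  define m where "m = Max {..<l}"
  have "m < l" using Max_in[OF fin ne] m_def by simp
  then have "succ m < l" using assms unfolding limit_def by blast
  then have "succ m \<le> m" unfolding m_def using Max_ge[OF fin] by simp
  then show False using less_succ[of m] by simp
qed

lemma fb_unh:
  assumes "limit (l::'a)"
  shows "unh (fb l)"
  unfolding unh_def
proof (intro allI impI)
  fix H :: "'a set" assume "finite H"
  have "strict_mono (succ :: 'a \<Rightarrow> 'a)" by (rule strict_monoI) (rule succ_mono)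
  then have "inj_on succ {..<l}" using strict_mono_imp_inj_on by blast
  then have "infinite (succ ` {..<l})" using limit_infinite[OF assms] finite_imageD by blast
  then have "\<not> (succ ` {..<l} \<subseteq> H)" using \<open>finite H\<close> finite_subset by blast
  then obtain x where "x \<in> succ ` {..<l}" "x \<notin> H" by blast
  then show "\<exists>q\<in>fb l. q \<inter> H = {}" unfolding fb_def by auto
qed

lemma unh_ne: "unh F \<Longrightarrow> F \<noteq> {}"
  unfolding unh_def by auto

lemma Q_props:
  assumes "limit (l::'a)"
  shows "Q l \<noteq> {} \<and> countable (Q l) \<and> unh (Q l)"
proof -
  have c1: "countable (dec ` {g \<in> Ag l. idx g})"
  proof -
    have "{g \<in> Ag l. idx g} \<subseteq> {..<l}" using Ag_sub by auto
    then have "countable {g \<in> Ag l. idx g}" using cseg countable_subset by blast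
    then show ?thesis by simp
  qed
  have c2: "countable (fb l)" unfolding fb_def using cseg by simp
  have "unh (Q l)" using fb_unh[OF assms] by (simp add: Q_eq Let_def)
  moreover have "countable (Q l)" using c1 c2 by (simp add: Q_eq Let_def)
  ultimately show ?thesis using unh_ne by blast
qed

lemma Q_cases:
  assumes "q \<in> Q (l::'a)"
  shows "(\<exists>b<l. q = {succ b}) \<or> (\<exists>g. g \<in> Ag l \<and> idx g \<and> q = dec g)"
  using assms by (auto simp: Q_eq Let_def fb_def split: if_splits)

definition Aset :: "'a set set" where
  "Aset = {insert l q | l q. limit l \<and> q \<in> Q l}"

lemma dec_form:
  assumes "idx (g::'a)"
  shows "limit (lev g) \<and> from_nat_into (Q (lev g)) (num g) \<in> Q (lev g) \<and>
         dec g = insert (lev g) (from_nat_into (Q (lev g)) (num g))"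
proof -
  have "limit (lev g)" using idx_D[OF assms] by blast
  moreover have "Q (lev g) \<noteq> {}" using Q_props[OF \<open>limit (lev g)\<close>] by blast
  ultimately show ?thesis using from_nat_into by (simp add: dec_def)
qed

lemma dec_Aset: "idx (g::'a) \<Longrightarrow> dec g \<in> Aset"
  using dec_form unfolding Aset_def by blast

lemma Q_sub:
  "limit (l::'a) \<Longrightarrow> q \<in> Q l \<Longrightarrow> finite q \<and> q \<subseteq> {..<l}"
proof (induction l arbitrary: q rule: less_induct)
  case (less l)
  from Q_cases[OF less.prems(2)] show ?case
  proof
    assume "\<exists>b<l. q = {succ b}"
    then obtain b where "b < l" "q = {succ b}" by blast
    then show ?thesis using less.prems(1) unfolding limit_def by auto
  next
    assume "\<exists>g. g \<in> Ag l \<and> idx g \<and> q = dec g"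
    then obtain g where g: "g \<in> Ag l" "idx g" "q = dec g" by blast
    have gl: "g < l" using g(1) Ag_sub by auto
    have ll: "lev g < l" using lev_less[OF g(2)] gl by simp
    note df = dec_form[OF g(2)]
    have "finite (from_nat_into (Q (lev g)) (num g)) \<and> from_nat_into (Q (lev g)) (num g) \<subseteq> {..<lev g}"
      using less.IH[OF ll] df by blast
    then show ?thesis using g(3) df ll by auto
  qed
qed

lemma Aset_D:
  assumes "p \<in> Aset"
  obtains l q where "limit l" "q \<in> Q l" "p = insert l q" "finite p" "p \<subseteq> {..l}" "l \<notin> q"
proof -
  obtain l q where lq: "limit l" "q \<in> Q l" "p = insert l q" using assms unfolding Aset_def by blast
  then have "finite q \<and> q \<subseteq> {..<l}" using Q_sub by blast
  then show ?thesis using lq by (intro that[of l q]) auto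
qed

lemma struct:
  assumes "limit (m::'a)" "limit l" "q \<in> Q l" "m \<in> insert l q"
  shows "\<exists>q'\<in>Q m. q' \<subseteq> insert l q \<and> insert l q \<inter> {..<m} = q'"
  using assms(2-4)
proof (induction l arbitrary: q rule: less_induct)
  case (less l)
  have qs: "finite q \<and> q \<subseteq> {..<l}" using Q_sub less.prems(1,2) by blast
  show ?case
  proof (cases "m = l")
    case True
    have "q \<subseteq> insert l q" by blast
    moreover have "insert l q \<inter> {..<l} = q" using qs by auto
    ultimately show ?thesis using True less.prems(2) by blast
  next
    case False
    then have mq: "m \<in> q" using less.prems(3) by simp
    from Q_cases[OF less.prems(2)] show ?thesis
    proof
      assume "\<exists>b<l. q = {succ b}"
      then obtain b where "q = {succ b}" by blast
      then have "m = succ b" using mq by simp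
      then show ?thesis using not_limit_succ[of b] assms(1) by simp
    next
      assume "\<exists>g. g \<in> Ag l \<and> idx g \<and> q = dec g"
      then obtain g where g: "g \<in> Ag l" "idx g" "q = dec g" by blast
      have "g < l" using g(1) Ag_sub by blast
      then have ll: "lev g < l" using lev_less[OF g(2)] by simp
      note df = dec_form[OF g(2)]
      define q0 where "q0 = from_nat_into (Q (lev g)) (num g)"
      have q0: "q = insert (lev g) q0" "q0 \<in> Q (lev g)" "limit (lev g)"
        using df g(3) q0_def by simp_all
      have "m \<in> insert (lev g) q0" using mq q0(1) by simp
      then obtain q' where q': "q' \<in> Q m" "q' \<subseteq> insert (lev g) q0" "insert (lev g) q0 \<inter> {..<m} = q'"
        using less.IH[OF ll q0(3) q0(2)] by blast
      have "m < l" using mq qs by blast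
      have "q' \<subseteq> insert l q" using q'(2) q0(1) by blast
      moreover have "insert l q \<inter> {..<m} = q'" using q'(3) q0(1) \<open>m < l\<close> by auto
      ultimately show ?thesis using q'(1) by blast
    qed
  qed
qed

lemma dec_surj:
  assumes "limit (l::'a)" "q \<in> Q l"
  shows "\<exists>g. idx g \<and> lev g = l \<and> dec g = insert l q"
proof -
  have "countable (Q l)" using Q_props[OF assms(1)] by blast
  then obtain n where n: "from_nat_into (Q l) n = q" using from_nat_into_surj[OF _ assms(2)] by blast
  define g where "g = (succ ^^ Suc n) l"
  have "idx g" using idx_iter assms g_def by simp
  moreover have "lev g = l \<and> num g = n" using levnum_iter[OF assms(1)] g_def by simp
  ultimately show ?thesis using n by (auto simp: dec_def)
qed

end


definition ind :: "'a set \<Rightarrow> 'a \<Rightarrow> bool" where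
  "ind p = (\<lambda>i. i \<in> p)"

lemma ind_inj: "ind p = ind q \<Longrightarrow> p = q"
  unfolding ind_def by (metis Collect_mem_eq)

lemma ind_app [simp]: "ind p i \<longleftrightarrow> i \<in> p"
  by (simp add: ind_def)

lemma ind_sigma: "finite p \<Longrightarrow> ind p \<in> sigma_set"
  by (simp add: sigma_set_def ind_def)

lemma ind_cyl: "ind p \<in> cyl F (ind q) \<longleftrightarrow> (\<forall>i\<in>F. i \<in> p \<longleftrightarrow> i \<in> q)"
  by (simp add: cyl_def)

locale bad = dia w Ag for w :: "'a::wellorder itself" and Ag +
  fixes E :: "('a \<Rightarrow> bool) set"
  assumes E_sub: "E \<subseteq> ind ` Aset"
    and E_disc: "discrete_in SS E"
    and E_cl: "ind ` {{l} | l. limit l} \<subseteq> SS closure_of E"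
begin

definition PE :: "'a set set" where "PE = {p. p \<in> Aset \<and> ind p \<in> E}"

lemma approach:
  assumes "limit v" "finite H" "v \<notin> H"
  shows "\<exists>r\<in>PE. v \<in> r \<and> r \<inter> H = {}"
proof -
  have "ind {v} \<in> SS closure_of E" using E_cl assms(1) by blast
  then obtain y where y: "y \<in> E" "y \<in> cyl (insert v H) (ind {v})"
    using closure_SS_D assms(2) by blast
  then obtain r where r: "r \<in> Aset" "y = ind r" using E_sub by blast
  have "r \<in> PE" using r y(1) by (simp add: PE_def)
  moreover have "v \<in> r" using y(2) r(2) by (simp add: ind_cyl)
  moreover have "r \<inter> H = {}" using y(2) r(2) assms(3) by (auto simp: ind_cyl)
  ultimately show ?thesis by blast
qed

lemma disc:
  assumes "p \<in> PE"
  shows "\<exists>F. finite F \<and> (\<forall>r\<in>PE. (\<forall>i\<in>F. i \<in> r \<longleftrightarrow> i \<in> p) \<longrightarrow> r = p)"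
proof -
  have "ind p \<in> E" using assms by (simp add: PE_def)
  then obtain F where F: "finite F" "\<forall>y\<in>E. y \<in> cyl F (ind p) \<longrightarrow> y = ind p"
    using discrete_SS_D[OF E_disc] by blast
  show ?thesis
  proof (intro exI conjI ballI impI)
    fix r assume "r \<in> PE" "\<forall>i\<in>F. i \<in> r \<longleftrightarrow> i \<in> p"
    then have "ind r \<in> E" "ind r \<in> cyl F (ind p)" by (simp_all add: PE_def ind_cyl)
    then show "r = p" using F(2) ind_inj by blast
  qed (rule F(1))
qed

lemma PE_fin: "r \<in> PE \<Longrightarrow> finite r"
  unfolding PE_def using Aset_D by blast

definition X :: "'a set" where "X = {g. idx g \<and> dec g \<in> PE}"
definition S :: "'a set" where "S = {a. X \<inter> {..<a} = Ag a}"

definition wit :: "'a \<Rightarrow> 'a set \<Rightarrow> 'a set" where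
  "wit v H = (SOME r. r \<in> PE \<and> v \<in> r \<and> r \<inter> H = {})"

definition nl :: "'a \<Rightarrow> 'a" where "nl b = (SOME l. limit l \<and> b < l)"

definition Wb :: "'a \<Rightarrow> 'a set" where
  "Wb b = insert b (insert (nl b) (\<Union> ((\<lambda>(v, H). wit v H) `
     {(v, H). v \<le> b \<and> limit v \<and> finite H \<and> H \<subseteq> {..b} \<and> v \<notin> H})))"

lemma wit:
  assumes "limit v" "finite H" "v \<notin> H"
  shows "wit v H \<in> PE \<and> v \<in> wit v H \<and> wit v H \<inter> H = {}"
  unfolding wit_def using approach[OF assms] by (rule someI_ex[OF bexE]) blast

lemma nl: "limit (nl b) \<and> b < nl b"
  unfolding nl_def by (rule someI_ex) (rule ex_limit)

lemma Wb_countable: "countable (Wb b)"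
proof -
  let ?I = "{(v, H). v \<le> b \<and> limit v \<and> finite H \<and> H \<subseteq> {..b} \<and> v \<notin> H}"
  have "?I \<subseteq> {..b} \<times> {H. finite H \<and> H \<subseteq> {..b}}" by auto
  moreover have "countable ({..b} \<times> {H. finite H \<and> H \<subseteq> {..b}})"
    using cseg_le countable_Collect_finite_subset by blast
  ultimately have cI: "countable ?I" using countable_subset by blast
  have cA: "\<And>p. p \<in> ?I \<Longrightarrow> countable ((\<lambda>(v, H). wit v H) p)"
  proof -
    fix p assume "p \<in> ?I"
    then obtain v H where "p = (v, H)" "limit v" "finite H" "v \<notin> H" by auto
    then show "countable ((\<lambda>(v, H). wit v H) p)"
      using wit PE_fin countable_finite by fastforce
  qed
  have "countable (\<Union> ((\<lambda>(v, H). wit v H) ` ?I))"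
    by (rule countable_UN[OF cI cA])
  then show ?thesis unfolding Wb_def by simp
qed

definition h :: "'a \<Rightarrow> 'a" where "h b = (SOME u. \<forall>x\<in>Wb b. x < u)"

lemma h: "\<forall>x\<in>Wb b. x < h b"
  unfolding h_def by (rule someI_ex[OF bounded[OF Wb_countable]])

lemma h_gt: "b < h b"
  using h[of b] by (simp add: Wb_def)

lemma CP_h_limit: "l \<in> CP h \<Longrightarrow> limit l"
  using CP_limit h_gt by blast


lemma K1:
  assumes "l \<in> CP h"
  shows "unh (dec ` (X \<inter> {..<l}))"
  unfolding unh_def
proof (intro allI impI)
  fix H :: "'a set" assume fH: "finite H"
  have lim: "limit l" using CP_h_limit assms by blast
  obtain b0 where b0: "b0 < l" using lim unfolding limit_def by blast
  define H' where "H' = H \<inter> {..<l}"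
  have fH': "finite H'" using fH H'_def by simp
  define m where "m = (if H' = {} then b0 else Max H')"
  have m_lt: "m < l"
  proof (cases "H' = {}")
    case True then show ?thesis using b0 m_def by simp
  next
    case False then have "Max H' \<in> H'" using Max_in fH' by blast
    then show ?thesis using m_def False H'_def by simp
  qed
  have m_ge: "\<forall>i\<in>H'. i \<le> m"
    using m_def fH' Max_ge by (metis empty_iff)
  define v where "v = nl m"
  have v: "limit v" "m < v" using nl v_def by auto
  have "v < h m" using h[of m] v_def by (simp add: Wb_def)
  moreover have "h m < l" using assms m_lt by (simp add: CP_def)
  ultimately have v_lt: "v < l" by simp
  define H'' where "H'' = H \<inter> {..v}"
  have fH'': "finite H''" using fH H''_def by simp
  have vH: "v \<notin> H''"
  proof
    assume "v \<in> H''"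
    then have "v \<in> H'" using H''_def H'_def v_lt by simp
    then show False using m_ge v(2) by fastforce
  qed
  define r where "r = wit v H''"
  have r: "r \<in> PE" "v \<in> r" "r \<inter> H'' = {}" using wit[OF v(1) fH'' vH] r_def by auto
  have "(v, H'') \<in> {(v', H). v' \<le> v \<and> limit v' \<and> finite H \<and> H \<subseteq> {..v} \<and> v' \<notin> H}"
    using v(1) fH'' vH H''_def by auto
  then have "r \<subseteq> Wb v" unfolding Wb_def r_def by blast
  moreover have "h v < l" using assms v_lt by (simp add: CP_def)
  ultimately have r_lt: "\<forall>i\<in>r. i < l"
    using h[of v] by (meson order.strict_trans subsetD)
  have rH: "r \<inter> H = {}"
  proof (rule ccontr)
    assume "r \<inter> H \<noteq> {}"
    then obtain i where i: "i \<in> r" "i \<in> H" by blast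
    then have "i \<in> H'" using r_lt H'_def by simp
    then have "i \<le> v" using m_ge v(2) by fastforce
    then have "i \<in> H''" using i H''_def by simp
    then show False using r(3) i(1) by blast
  qed
  have "r \<in> Aset" using r(1) by (simp add: PE_def)
  then obtain l0 q0 where lq: "limit l0" "q0 \<in> Q l0" "r = insert l0 q0" by (rule Aset_D)
  have "l0 < l" using r_lt lq(3) by simp
  obtain g where g: "idx g" "lev g = l0" "dec g = insert l0 q0" using dec_surj[OF lq(1,2)] by blast
  have "g = (succ ^^ Suc (num g)) l0" using idx_D[OF g(1)] g(2) by simp
  then have "g < l" using iter_less_limit[OF lim \<open>l0 < l\<close>] by metis
  moreover have "g \<in> X" using g r(1) lq(3) by (simp add: X_def)
  ultimately have "r \<in> dec ` (X \<inter> {..<l})" using g(3) lq(3) by auto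
  then show "\<exists>q\<in>dec ` (X \<inter> {..<l}). q \<inter> H = {}" using rH by blast
qed

lemma Q_good:
  assumes "l \<in> S" "l \<in> CP h"
  shows "Q l = dec ` (X \<inter> {..<l})"
proof -
  have "{g \<in> Ag l. idx g} = X \<inter> {..<l}"
    using assms(1) by (auto simp: S_def X_def)
  then show ?thesis using K1[OF assms(2)] by (simp add: Q_eq Let_def)
qed


definition T :: "'a set" where "T = S \<inter> CP h"

lemma S_stat: "stationary S"
  unfolding S_def by (rule Ag_stat)

lemma c_step:
  assumes "l \<in> T"
  shows "\<exists>g. g \<in> X \<and> g < l \<and> (\<exists>r\<in>PE. l \<in> r \<and> r \<inter> {..<l} = dec g)"
proof -
  have lS: "l \<in> S" and lC: "l \<in> CP h" using assms by (auto simp: T_def)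
  have lim: "limit l" using CP_h_limit lC by blast
  obtain r where r: "r \<in> PE" "l \<in> r" using approach[OF lim, of "{}"] by auto
  have "r \<in> Aset" using r(1) by (simp add: PE_def)
  then obtain l0 q0 where lq: "limit l0" "q0 \<in> Q l0" "r = insert l0 q0" by (rule Aset_D)
  obtain q' where q': "q' \<in> Q l" "r \<inter> {..<l} = q'"
    using struct[OF lim lq(1,2)] r(2) lq(3) by blast
  then obtain g where "g \<in> X \<inter> {..<l}" "q' = dec g" using Q_good[OF lS lC] by blast
  then show ?thesis using r q' by blast
qed

definition gg :: "'a \<Rightarrow> 'a" where
  "gg l = (SOME g. g \<in> X \<and> g < l \<and> (\<exists>r\<in>PE. l \<in> r \<and> r \<inter> {..<l} = dec g))"

lemma gg: "l \<in> T \<Longrightarrow> gg l \<in> X \<and> gg l < l \<and> (\<exists>r\<in>PE. l \<in> r \<and> r \<inter> {..<l} = dec (gg l))"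
  unfolding gg_def by (rule someI_ex) (rule c_step)

lemma fodor: "\<exists>b. \<not> countable {l\<in>T. gg l \<le> b}"
proof (rule ccontr)
  assume "\<not> (\<exists>b. \<not> countable {l\<in>T. gg l \<le> b})"
  then have cnt: "\<And>b. countable {l\<in>T. gg l \<le> b}" by blast
  define h2 where "h2 b = (SOME u. \<forall>x\<in>{l\<in>T. gg l \<le> b}. x < u)" for b
  have h2: "\<And>b. \<forall>x\<in>{l\<in>T. gg l \<le> b}. x < h2 b"
    unfolding h2_def by (rule someI_ex[OF bounded[OF cnt]])
  define h3 where "h3 b = max (h b) (h2 b)" for b
  have "S \<inter> CP h3 \<noteq> {}" using S_stat CP_closed[of h3] by (simp add: stationary_def)
  then obtain l where l: "l \<in> S" "l \<in> CP h3" by blast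
  have "l \<in> CP h" using l(2) by (auto simp: CP_def h3_def)
  then have lT: "l \<in> T" using l(1) by (simp add: T_def)
  have "gg l < l" using gg[OF lT] by blast
  then have "h3 (gg l) < l" using l(2) by (simp add: CP_def)
  then have "h2 (gg l) < l" by (simp add: h3_def)
  moreover have "l < h2 (gg l)" using h2[of "gg l"] lT by simp
  ultimately show False by (meson less_asym)
qed

theorem contradiction: False
proof -
  obtain b where b: "\<not> countable {l\<in>T. gg l \<le> b}" using fodor by blast
  have eq: "{l\<in>T. gg l \<le> b} = (\<Union>g\<in>{..b}. {l\<in>T. gg l = g})"
    by (rule set_eqI) simp
  have "\<exists>gs. \<not> countable {l\<in>T. gg l = gs}"
  proof (rule ccontr)
    assume "\<not> (\<exists>gs. \<not> countable {l\<in>T. gg l = gs})"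
    then have "\<And>g. countable {l\<in>T. gg l = g}" by simp
    then have "countable (\<Union>g\<in>{..b}. {l\<in>T. gg l = g})" by (intro countable_UN[OF cseg_le])
    then show False using b eq by simp
  qed
  then obtain gs where gs: "\<not> countable {l\<in>T. gg l = gs}" by blast
  have "{l\<in>T. gg l = gs} \<noteq> {}" using gs by (metis countable_empty)
  then obtain l1 where l1: "l1 \<in> T" "gg l1 = gs" by blast
  have "gs \<in> X" using gg[OF l1(1)] l1(2) by simp
  then have pPE: "dec gs \<in> PE" by (simp add: X_def)
  obtain F where F: "finite F" "\<forall>r\<in>PE. (\<forall>i\<in>F. i \<in> r \<longleftrightarrow> i \<in> dec gs) \<longrightarrow> r = dec gs"
    using disc[OF pPE] by blast
  obtain u where u: "\<forall>i\<in>F. i < u" using bounded[OF countable_finite[OF F(1)]] by blast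
  obtain l where l: "l \<in> {l\<in>T. gg l = gs}" "u < l" using uncountable_unbounded[OF gs] by blast
  have lT: "l \<in> T" "gg l = gs" using l(1) by simp_all
  obtain r where r: "r \<in> PE" "l \<in> r" "r \<inter> {..<l} = dec gs" using gg[OF lT(1)] lT(2) by blast
  have "\<forall>i\<in>F. i \<in> r \<longleftrightarrow> i \<in> dec gs"
  proof
    fix i assume "i \<in> F"
    then have "i < l" using u l(2) by fastforce
    then have "i \<in> r \<longleftrightarrow> i \<in> r \<inter> {..<l}" by simp
    then show "i \<in> r \<longleftrightarrow> i \<in> dec gs" using r(3) by simp
  qed
  then have "r = dec gs" using F(2) r(1) by blast
  then have "l \<in> r \<inter> {..<l}" using r(2) r(3) by simp
  then show False by simp
qed

end

context dia
begin

lemma notDDG: "\<not> DDG (SS :: ('a \<Rightarrow> bool) topology)"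
proof
  assume ddg: "DDG (SS :: ('a \<Rightarrow> bool) topology)"
  define A where "A = ind ` Aset"
  define D where "D = ind ` {{l} | l::'a. limit l}"
  have A_sig: "A \<subseteq> sigma_set"
  proof
    fix x assume "x \<in> A"
    then obtain p where p: "p \<in> Aset" "x = ind p" by (auto simp: A_def)
    have "finite p" using p(1) by (rule Aset_D)
    then show "x \<in> sigma_set" using p(2) ind_sigma by simp
  qed
  have D_sig: "D \<subseteq> sigma_set" unfolding D_def using ind_sigma by auto
  have D_cl: "D \<subseteq> SS closure_of A"
  proof
    fix x assume "x \<in> D"
    then obtain l where l: "limit l" "x = ind {l}" by (auto simp: D_def)
    show "x \<in> SS closure_of A"
    proof (rule closure_SS_I)
      show "x \<in> sigma_set" using l(2) ind_sigma[of "{l}"] by simp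
      show "A \<subseteq> sigma_set" by (rule A_sig)
      fix F :: "'a set" assume "finite F"
      then obtain q where q: "q \<in> Q l" "q \<inter> F = {}" using Q_props[OF l(1)] unfolding unh_def by blast
      have "insert l q \<in> Aset" using l(1) q(1) unfolding Aset_def by blast
      then have "ind (insert l q) \<in> A" by (simp add: A_def)
      moreover have "ind (insert l q) \<in> cyl F x" using q(2) l(2) by (auto simp: ind_cyl)
      ultimately show "\<exists>y\<in>A. y \<in> cyl F x" by blast
    qed
  qed
  have D_disc: "discrete_in SS D"
  proof (rule discrete_SS_I[OF D_sig])
    fix x assume "x \<in> D"
    then obtain l where l: "limit l" "x = ind {l}" by (auto simp: D_def)
    show "\<exists>F. finite F \<and> (\<forall>y\<in>D. y \<in> cyl F x \<longrightarrow> y = x)"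
    proof (intro exI conjI ballI impI)
      show "finite {l}" by simp
      fix y assume "y \<in> D" "y \<in> cyl {l} x"
      then obtain m where m: "y = ind {m}" by (auto simp: D_def)
      then have "l \<in> {m}" using \<open>y \<in> cyl {l} x\<close> l(2) by (simp add: ind_cyl)
      then show "y = x" using m l(2) by simp
    qed
  qed
  have "A \<subseteq> topspace SS" using A_sig by simp
  then have "\<exists>E. E \<subseteq> A \<and> discrete_in SS E \<and> D \<subseteq> SS closure_of E"
    using ddg[unfolded DDG_def, rule_format, OF _ D_cl D_disc] by blast
  then obtain E where E: "E \<subseteq> A" "discrete_in SS E" "D \<subseteq> SS closure_of E"
    by blast
  have "bad Ag E"
  proof (rule bad.intro[OF dia_axioms], rule bad_axioms.intro)
    show "E \<subseteq> ind ` Aset" using E(1) unfolding A_def .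
    show "discrete_in SS E" by (rule E(2))
    show "ind ` {{l} |l. limit l} \<subseteq> SS closure_of E" using E(3) unfolding D_def .
  qed
  then show False by (rule bad.contradiction)
qed

end

theorem theorem6p10:
  fixes w1 :: "'a::wellorder itself"
  assumes "is_omega1_type w1"
      and "diamond w1"
  shows "\<not> DDG (subtopology (cantor_cube :: ('a \<Rightarrow> bool) topology) sigma_set)"
proof -
  have o: "om1 TYPE('a)"
  proof (rule om1.intro)
    show "\<not> countable (UNIV :: 'a set)" using assms(1) unfolding is_omega1_type_def by blast
    fix a :: 'a show "countable {..<a}" using assms(1) unfolding is_omega1_type_def by blast
  qed
  obtain Ag :: "'a \<Rightarrow> 'a set" where Ag: "\<forall>a. Ag a \<subseteq> {..<a}"
      "\<forall>X :: 'a set. stationary {a. X \<inter> {..<a} = Ag a}"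
    using assms(2) unfolding diamond_def by blast
  have "dia Ag"
  proof (rule dia.intro[OF o], rule dia_axioms.intro)
    fix a show "Ag a \<subseteq> {..<a}" using Ag(1) by blast
  next
    fix X show "stationary {a. X \<inter> {..<a} = Ag a}" using Ag(2) by blast
  qed
  then show ?thesis by (rule dia.notDDG)
qed


end
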